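(* Consider the deterministic one-dimensional state equation $\dot X(s)=s\,u_1(s)+u_2(s)$, $s\in[0,1]$, $X(0)=x$, with controls $u_1,u_2\in L^2(0,1;\mathbb R)$, and the functional $J(x;u_1,u_2)=-|X(1)|^2+\int_0^1 s^2|u_1(s)|^2ds$. Then: (i) $J(0;u_1,0)\ge0$ for all $u_1$ and $J(0;0,u_2)\le0$ for all $u_2$; (ii) $(u_1,u_2)=(0,-1)$ is an open-loop saddle point of the game (Player 1 minimizing, Player 2 maximizing $J$) for $x=1$; (iii) for every $\varepsilon>0$, the game with functional $J_\varepsilon(x;u_1,u_2)=J(x;u_1,u_2)-\varepsilon\int_0^1|u_2(s)|^2ds$ (same state equation) has no open-loop saddle point for $x=1$.
   Context: An open-loop saddle point for initial state $x$ of a game with functional $\mathcal J$ is a pair $(u_1^*,u_2^* )$ with $\mathcal J(x;u_1^*,u_2)\le\mathcal J(x;u_1^*,u_2^* )\le\mathcal J(x;u_1,u_2^* )$ for all admissible $(u_1,u_2)$; here the admissible controls of both players are all real square-integrable functions on $[0,1]$. *)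

theory Defs
  imports "HOL-Analysis.Analysis"
begin

text \<open>Admissible controls: real square-integrable functions on [0,1]
  (values outside [0,1] are irrelevant).\<close>
definition L2adm :: "(real \<Rightarrow> real) \<Rightarrow> bool" where
  "L2adm u \<longleftrightarrow> u \<in> borel_measurable (lebesgue_on {0..1})
      \<and> integrable (lebesgue_on {0..1}) (\<lambda>s. (u s)^2)"

text \<open>Solution of the state equation X'(s) = s u1(s) + u2(s), X(0) = x.\<close>
definition Xstate :: "real \<Rightarrow> (real \<Rightarrow> real) \<Rightarrow> (real \<Rightarrow> real) \<Rightarrow> real \<Rightarrow> real" where
  "Xstate x u1 u2 t = x + integral\<^sup>L (lebesgue_on {0..t}) (\<lambda>s. s * u1 s + u2 s)"

definition Jfun :: "real \<Rightarrow> (real \<Rightarrow> real) \<Rightarrow> (real \<Rightarrow> real) \<Rightarrow> real" where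
  "Jfun x u1 u2 = - (\<bar>Xstate x u1 u2 1\<bar>^2)
      + integral\<^sup>L (lebesgue_on {0..1}) (\<lambda>s. s^2 * \<bar>u1 s\<bar>^2)"

definition Jeps :: "real \<Rightarrow> real \<Rightarrow> (real \<Rightarrow> real) \<Rightarrow> (real \<Rightarrow> real) \<Rightarrow> real" where
  "Jeps \<epsilon> x u1 u2 = Jfun x u1 u2 - \<epsilon> * integral\<^sup>L (lebesgue_on {0..1}) (\<lambda>s. \<bar>u2 s\<bar>^2)"

definition open_loop_saddle ::
  "(real \<Rightarrow> (real \<Rightarrow> real) \<Rightarrow> (real \<Rightarrow> real) \<Rightarrow> real) \<Rightarrow> real
     \<Rightarrow> (real \<Rightarrow> real) \<Rightarrow> (real \<Rightarrow> real) \<Rightarrow> bool" where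
  "open_loop_saddle J x a b \<longleftrightarrow> L2adm a \<and> L2adm b \<and>
     (\<forall>u1 u2. L2adm u1 \<and> L2adm u2 \<longrightarrow> J x a u2 \<le> J x a b \<and> J x a b \<le> J x u1 b)"

end

theory Submission
  imports Defs
begin

abbreviation "M \<equiv> lebesgue_on {0..1::real}"

lemma meas_id[measurable]: "(\<lambda>x::real. x) \<in> borel_measurable (lebesgue_on S)"
  by (metis eq_id_iff id_borel_measurable_lebesgue measurable_restrict_space1)

lemma fmM: "finite_measure M"
  by (rule finite_measure_lebesgue_on) auto

lemma measM: "measure M {0..1} = 1"
  by (simp add: measure_restrict_space)

lemma emM: "emeasure M A < \<infinity>"
  by (metis finite_measure.emeasure_finite finite_measure_lebesgue_on lmeasurable_cbox cbox_interval infinity_ennreal_def top.not_eq_extremum)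

lemma ind: assumes "A \<subseteq> {0..1}" "A \<in> sets lebesgue"
  shows "integrable M (indicator A :: real \<Rightarrow> real)" "integral\<^sup>L M (indicator A :: real \<Rightarrow> real) = measure lebesgue A"
proof -
  have s: "A \<in> sets M" using assms by (simp add: sets_restrict_space_iff)
  show "integrable M (indicator A :: real \<Rightarrow> real)" using s emM by auto
  have "A \<inter> {0..1} = A" using assms by auto
  thus "integral\<^sup>L M (indicator A :: real \<Rightarrow> real) = measure lebesgue A"
    using assms by (simp add: measure_restrict_space)
qed

lemma L2_int: assumes "L2adm u" shows "integrable M u"
  using assms unfolding L2adm_def
  using finite_measure.square_integrable_imp_integrable[OF fmM] by blast

lemma L2_sq: assumes "L2adm u" shows "integrable M (\<lambda>s. (u s)^2)"
  using assms unfolding L2adm_def by auto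

lemma L2_smult: assumes "L2adm u" shows "L2adm (\<lambda>s. s * u s)"
proof -
  have m: "u \<in> borel_measurable M" and i: "integrable M (\<lambda>s. (u s)^2)" using assms unfolding L2adm_def by auto
  have m2: "(\<lambda>s. s * u s) \<in> borel_measurable M" using m by measurable
  have "integrable M (\<lambda>s. (s * u s)^2)"
  proof (rule Bochner_Integration.integrable_bound[OF i])
    show "(\<lambda>s. (s * u s)^2) \<in> borel_measurable M" using m by measurable
    show "AE x in M. norm ((x * u x)^2) \<le> norm ((u x)^2)"
    proof (rule AE_I2)
      fix x assume "x \<in> space M"
      hence "x^2 \<le> 1" by (auto intro: power_le_one)
      hence "x^2 * (u x)^2 \<le> 1 * (u x)^2" by (intro mult_right_mono) auto
      thus "norm ((x * u x)^2) \<le> norm ((u x)^2)" by (simp add: power_mult_distrib)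
    qed
  qed
  thus ?thesis using m2 unfolding L2adm_def by auto
qed

lemma L2_const: "L2adm (\<lambda>_. c)"
  unfolding L2adm_def using finite_measure.integrable_const[OF fmM] by auto

lemma int_const: "integral\<^sup>L M (\<lambda>_. c) = (c::real)"
  using lebesgue_integral_const[of M c] measM by simp

lemma CS: assumes "L2adm f" shows "(integral\<^sup>L M f)^2 \<le> integral\<^sup>L M (\<lambda>s. (f s)^2)"
proof -
  define c where "c = integral\<^sup>L M f"
  have i1: "integrable M f" using L2_int[OF assms] .
  have i2: "integrable M (\<lambda>s. (f s)^2)" using assms unfolding L2adm_def by auto
  have "0 \<le> integral\<^sup>L M (\<lambda>s. (f s - c)^2)" by simp
  also have "(\<lambda>s. (f s - c)^2) = (\<lambda>s. (f s)^2 - 2 * c * f s + c^2)" by (auto simp: power2_eq_square algebra_simps)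
  also have "integral\<^sup>L M \<dots> = integral\<^sup>L M (\<lambda>s. (f s)^2) - 2 * c * c + c^2"
    using i1 i2 by (simp add: measM c_def)
  finally show ?thesis unfolding c_def by (simp add: power2_eq_square)
qed

lemma Jfun_eq: assumes "L2adm u1" "L2adm u2"
  shows "Jfun x u1 u2 = - ((x + integral\<^sup>L M (\<lambda>s. s * u1 s) + integral\<^sup>L M u2)^2)
     + integral\<^sup>L M (\<lambda>s. (s * u1 s)^2)"
proof -
  have "integral\<^sup>L M (\<lambda>s. s * u1 s + u2 s) = integral\<^sup>L M (\<lambda>s. s * u1 s) + integral\<^sup>L M u2"
    using L2_int[OF L2_smult[OF assms(1)]] L2_int[OF assms(2)] by simp
  moreover have "(\<lambda>s. s^2 * \<bar>u1 s\<bar>^2) = (\<lambda>s. (s * u1 s)^2)" by (simp add: power_mult_distrib)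
  ultimately show ?thesis unfolding Jfun_def Xstate_def by (simp add: add.assoc)
qed

lemma Jeps_eq: assumes "L2adm u1" "L2adm u2"
  shows "Jeps e x u1 u2 = - ((x + integral\<^sup>L M (\<lambda>s. s * u1 s) + integral\<^sup>L M u2)^2)
     + integral\<^sup>L M (\<lambda>s. (s * u1 s)^2) - e * integral\<^sup>L M (\<lambda>s. (u2 s)^2)"
  unfolding Jeps_def Jfun_eq[OF assms] by simp

lemma part3:
  assumes ep: "e > 0" and sad: "open_loop_saddle (Jeps e) 1 a b"
  shows False
proof -
  have La: "L2adm a" and Lb: "L2adm b" using sad unfolding open_loop_saddle_def by auto
  have sad1: "\<And>u2. L2adm u2 \<Longrightarrow> Jeps e 1 a u2 \<le> Jeps e 1 a b"
    and sad2: "\<And>u1. L2adm u1 \<Longrightarrow> Jeps e 1 a b \<le> Jeps e 1 u1 b"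
    using sad La Lb unfolding open_loop_saddle_def by blast+
  define A where "A = integral\<^sup>L M (\<lambda>s. s * a s)"
  define B where "B = integral\<^sup>L M b"
  define S where "S = integral\<^sup>L M (\<lambda>s. (s * a s)^2)"
  define Q where "Q = integral\<^sup>L M (\<lambda>s. (b s)^2)"
  define K where "K = 1 + B"
  have SA: "A^2 \<le> S" using CS[OF L2_smult[OF La]] unfolding A_def S_def .
  have QB: "B^2 \<le> Q" using CS[OF Lb] unfolding B_def Q_def .
  have Jab: "Jeps e 1 a b = - ((K + A)^2) + S - e * Q"
    unfolding Jeps_eq[OF La Lb] A_def B_def S_def Q_def K_def by (simp add: algebra_simps)
  show False
  proof (cases "K = 0")
    case False
    define t where "t = 2 * \<bar>A\<bar> / \<bar>K\<bar> + 1"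
    have t1: "t \<ge> 1" unfolding t_def by simp
    define d where "d = 1 / (t + 1)"
    define m where "m = K * (t + 1)"
    have d0: "0 < d" "d \<le> 1" using t1 unfolding d_def by auto
    define u where "u = (\<lambda>s::real. m / s * indicator {d..1} s)"
    have su: "(\<lambda>s. s * u s) = (\<lambda>s. m * indicator {d..1} s)"
      using d0 by (auto simp: u_def indicator_def fun_eq_iff)
    have su2: "(\<lambda>s. (s * u s)^2) = (\<lambda>s. m^2 * indicator {d..1} s)"
    proof -
      have "\<And>s. (s * u s)^2 = (m * indicator {d..1} s)^2" using su by metis
      thus ?thesis by (auto simp: indicator_def fun_eq_iff power_mult_distrib)
    qed
    have Lu: "L2adm u"
    proof -
      have mu: "u \<in> borel_measurable M" unfolding u_def by measurable
      have "integrable M (\<lambda>s. (u s)^2)"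
      proof (rule Bochner_Integration.integrable_bound[of M "\<lambda>_. (m/d)^2"])
        show "integrable M (\<lambda>_. (m/d)^2)" using finite_measure.integrable_const[OF fmM] .
        show "(\<lambda>s. (u s)^2) \<in> borel_measurable M" using mu by measurable
        show "AE x in M. norm ((u x)^2) \<le> norm ((m/d)^2)"
        proof (rule AE_I2)
          fix x assume x: "x \<in> space M"
          show "norm ((u x)^2) \<le> norm ((m/d)^2)"
          proof (cases "x \<in> {d..1}")
            case True
            hence "\<bar>m / x\<bar> \<le> \<bar>m / d\<bar>" using d0
              by (auto simp: abs_divide intro!: divide_left_mono)
            hence "\<bar>m / x\<bar>^2 \<le> \<bar>m / d\<bar>^2" by (intro power_mono) auto
            hence "(m / x)^2 \<le> (m / d)^2" by (metis power2_abs)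
            thus ?thesis using True by (simp add: u_def)
          qed (simp add: u_def)
        qed
      qed
      thus ?thesis using mu unfolding L2adm_def by auto
    qed
    have mes: "measure lebesgue {d..1} = 1 - d" using d0 by simp
    have I1: "integral\<^sup>L M (\<lambda>s. s * u s) = m * (1 - d)"
      unfolding su using ind[of "{d..1}"] d0 mes by simp
    have I2: "integral\<^sup>L M (\<lambda>s. (s * u s)^2) = m^2 * (1 - d)"
      unfolding su2 using ind[of "{d..1}"] d0 mes by simp
    have Jub: "Jeps e 1 u b = - ((K + m * (1 - d))^2) + m^2 * (1 - d) - e * Q"
      unfolding Jeps_eq[OF Lu Lb] I1 I2 B_def Q_def K_def by (simp add: algebra_simps)
    have md: "m * (1 - d) = K * t" unfolding m_def d_def using t1 by (simp add: field_simps)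
    have md2: "m^2 * (1 - d) = K^2 * t * (t + 1)" unfolding m_def d_def using t1
      by (simp add: field_simps power2_eq_square)
    have Jub2: "Jeps e 1 u b = - (K^2 * (t + 1)) - e * Q"
      unfolding Jub md md2 by (simp add: power2_eq_square algebra_simps)
    have Kp: "K^2 > 0" using False by simp
    have "K^2 * t = 2 * \<bar>A\<bar> * \<bar>K\<bar> + K^2" unfolding t_def using False
      by (simp add: field_simps power2_eq_square)
    moreover have "K * A \<le> \<bar>A\<bar> * \<bar>K\<bar>" by (metis abs_ge_self abs_mult mult.commute)
    ultimately have "K^2 * t > 2 * K * A" using Kp by linarith
    hence "Jeps e 1 u b < Jeps e 1 a b" unfolding Jub2 Jab using SA
      by (simp add: power2_eq_square algebra_simps)
    thus False using sad2[OF Lu] by simp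
  next
    case True
    hence B1: "B = -1" unfolding K_def by simp
    hence Q1: "Q \<ge> 1" using QB by simp
    show False
    proof (cases "A = 0")
      case True
      define c where "c = - 1 / (1 + e)"
      have "Jeps e 1 a (\<lambda>_. c) = - ((1 + A + c)^2) + S - e * c^2"
        unfolding Jeps_eq[OF La L2_const] int_const A_def S_def by simp
      also have "\<dots> = S - e / (1 + e)"
      proof -
        have ne: "1 + e \<noteq> 0" using ep by simp
        have c1: "1 + A + c = e / (1 + e)" using True ne unfolding c_def by (simp add: field_simps)
        have "(e / (1 + e))^2 + e * c^2 = e * (e + 1) / (1 + e)^2" unfolding c_def
          by (simp add: power_divide power2_eq_square add_divide_distrib[symmetric] algebra_simps)
        also have "\<dots> = e / (1 + e)" using ne by (simp add: power2_eq_square add.commute)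
        finally show ?thesis using c1 by simp
      qed
      also have "\<dots> > S - e * Q"
      proof -
        have "e / (1 + e) < e" using ep by (simp add: field_simps)
        also have "e \<le> e * Q" using Q1 ep by simp
        finally show ?thesis by simp
      qed
      finally have "Jeps e 1 a (\<lambda>_. c) > Jeps e 1 a b" unfolding Jab using \<open>K = 0\<close> True by simp
      thus False using sad1[OF L2_const] by (simp add: not_le[symmetric])
    next
      case Anz: False
      have "Jeps e 1 a b \<le> Jeps e 1 (\<lambda>_. 0) b" using sad2[OF L2_const] .
      also have "Jeps e 1 (\<lambda>_. 0) b = - e * Q"
        unfolding Jeps_eq[OF L2_const Lb] by (simp add: B_def[symmetric] Q_def[symmetric] B1)
      finally have SA2: "S \<le> A^2" unfolding Jab using \<open>K = 0\<close> by simp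
      have ia: "integrable M (\<lambda>s. s * a s)" using L2_int[OF L2_smult[OF La]] .
      have ia2: "integrable M (\<lambda>s. (s * a s)^2)" using L2_sq[OF L2_smult[OF La]] .
      have sq: "(\<lambda>s. (s * a s - A)^2) = (\<lambda>s. (s * a s)^2 - 2 * A * (s * a s) + A^2)"
        by (auto simp: power2_eq_square algebra_simps)
      have iv: "integrable M (\<lambda>s. (s * a s - A)^2)" unfolding sq using ia ia2 fmM
        by (intro Bochner_Integration.integrable_add Bochner_Integration.integrable_diff
            integrable_mult_right finite_measure.integrable_const) auto
      have "integral\<^sup>L M (\<lambda>s. (s * a s - A)^2) = S - 2 * A * A + A^2"
        unfolding sq using ia ia2 measM by (simp add: int_const A_def S_def)
      hence "integral\<^sup>L M (\<lambda>s. (s * a s - A)^2) = 0"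
        using SA SA2 by (simp add: power2_eq_square)
      hence "AE s in M. (s * a s - A)^2 = 0"
        using integral_nonneg_eq_0_iff_AE[OF iv] by simp
      hence AEa: "AE s in M. s * a s = A" by simp
      define R where "R = integral\<^sup>L M (\<lambda>s. (a s)^2)"
      have R0: "R \<ge> 0" unfolding R_def by simp
      define d where "d = A^2 / (R + A^2 + 1)"
      have A2: "A^2 > 0" using Anz by simp
      have den: "R + A^2 + 1 > 0" using R0 A2 by linarith
      have d0: "0 < d" "d \<le> 1" unfolding d_def
        using divide_pos_pos[OF A2 den] apply simp
        using den R0 by (simp add: divide_le_eq)
      have "AE s in M. (A/d)^2 * indicator {0<..d} s \<le> (a s)^2"
        using AEa
      proof (rule AE_mp, intro AE_I2 impI)
        fix s assume s: "s \<in> space M" and e1: "s * a s = A"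
        show "(A/d)^2 * indicator {0<..d} s \<le> (a s)^2"
        proof (cases "s \<in> {0<..d}")
          case True
          hence as: "a s = A / s" using e1 by (auto simp: field_simps)
          have "\<bar>A / d\<bar> \<le> \<bar>A / s\<bar>" using True
            by (auto simp: abs_divide intro!: divide_left_mono)
          hence "\<bar>A / d\<bar>^2 \<le> \<bar>A / s\<bar>^2" by (intro power_mono) auto
          hence "(A / d)^2 \<le> (A / s)^2" by (metis power2_abs)
          thus ?thesis using True as by simp
        qed simp
      qed
      hence "integral\<^sup>L M (\<lambda>s. (A/d)^2 * indicator {0<..d} s) \<le> R"
        unfolding R_def
      proof (rule integral_mono_AE[rotated 2])
        have sub: "{0<..d} \<subseteq> {0..1}" using d0 by auto
        have ii: "integrable M (indicator {0<..d} :: real \<Rightarrow> real)" using ind(1)[OF sub] by simp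
        show "integrable M (\<lambda>s. (A/d)^2 * indicator {0<..d} s)" using integrable_mult_right[OF ii] .
      qed (use L2_sq[OF La] in auto)
      moreover have "integral\<^sup>L M (\<lambda>s. (A/d)^2 * indicator {0<..d} s) = (A/d)^2 * d"
      proof -
        have "{0<..d} \<inter> {0..1} = {0<..d}" using d0 by auto
        moreover have "measure M {0<..d} = d" using d0 by (subst measure_restrict_space) auto
        ultimately have "measure M ({0<..d} \<inter> {0..1}) = d" by simp
        thus ?thesis by simp
      qed
      moreover have "(A/d)^2 * d = R + A^2 + 1"
      proof -
        have "(A/d)^2 * d = A^2 / d" using d0 by (simp add: power2_eq_square field_simps)
        also have "A^2 / d = R + A^2 + 1" unfolding d_def using A2 den by simp
        finally show ?thesis .
      qed
      ultimately show False using A2 by linarith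
    qed
  qed
qed

theorem mainTheorem10:
  shows "(\<forall>u1. L2adm u1 \<longrightarrow> Jfun 0 u1 (\<lambda>_. 0) \<ge> 0)
       \<and> (\<forall>u2. L2adm u2 \<longrightarrow> Jfun 0 (\<lambda>_. 0) u2 \<le> 0)
       \<and> open_loop_saddle Jfun 1 (\<lambda>_. 0) (\<lambda>_. -1)
       \<and> (\<forall>\<epsilon>>0. \<not> (\<exists>a b. open_loop_saddle (Jeps \<epsilon>) 1 a b))"
proof (intro conjI allI impI)
  fix u1 :: "real \<Rightarrow> real" assume L: "L2adm u1"
  show "Jfun 0 u1 (\<lambda>_. 0) \<ge> 0"
    unfolding Jfun_eq[OF L L2_const] using CS[OF L2_smult[OF L]] by simp
next
  fix u2 :: "real \<Rightarrow> real" assume L: "L2adm u2"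
  show "Jfun 0 (\<lambda>_. 0) u2 \<le> 0"
    unfolding Jfun_eq[OF L2_const L] by simp
next
  have J0: "Jfun 1 (\<lambda>_. 0) (\<lambda>_. -1) = 0"
    unfolding Jfun_eq[OF L2_const L2_const] int_const by simp
  show "open_loop_saddle Jfun 1 (\<lambda>_. 0) (\<lambda>_. -1)"
    unfolding open_loop_saddle_def J0
  proof (intro conjI allI impI L2_const)
    fix u1 u2 :: "real \<Rightarrow> real" assume L: "L2adm u1 \<and> L2adm u2"
    show "Jfun 1 (\<lambda>_. 0) u2 \<le> 0" unfolding Jfun_eq[OF L2_const conjunct2[OF L]] by simp
    show "0 \<le> Jfun 1 u1 (\<lambda>_. -1)" unfolding Jfun_eq[OF conjunct1[OF L] L2_const] int_const
      using CS[OF L2_smult[OF conjunct1[OF L]]] by simp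
  qed
next
  fix e :: real assume "e > 0"
  thus "\<not> (\<exists>a b. open_loop_saddle (Jeps e) 1 a b)" using part3 by blast
qed

end
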